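(* For all $n\in\mathbb N=\{0,1,2,\dots\}$ and all integers $d\geq 1$, the rational fraction $$S_{n,d}=\sum_{k=0}^nU_{d-1}\circ T_{(d+1)^k}\prod_{j=0}^k\frac{1}{U_d\circ T_{(d+1)^j}}\in\mathbb Q(x)$$ satisfies the identity $$S_{n,d}^2-2xS_{n,d}+1=\left(\prod_{j=0}^n\frac{1}{U_d\circ T_{(d+1)^j}}\right)^2.$$
   Context: $T_n=T_n(x)$ and $U_n=U_n(x)$ denote the Chebyshev polynomials of the first and second kind, defined by $T_0=1$, $T_1=x$, $T_{n+1}=2xT_n-T_{n-1}$ and $U_0=1$, $U_1=2x$, $U_{n+1}=2xU_n-U_{n-1}$ for $n\geq1$. The symbol $\circ$ denotes composition of polynomials, so $U_{d}\circ T_m$ is $U_d(T_m(x))$. *)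

theory Defs
  imports "HOL-Computational_Algebra.Computational_Algebra"
begin

fun cheb_T :: "nat \<Rightarrow> rat poly" where
  "cheb_T 0 = 1"
| "cheb_T (Suc 0) = [:0, 1:]"
| "cheb_T (Suc (Suc n)) = [:0, 2:] * cheb_T (Suc n) - cheb_T n"

fun cheb_U :: "nat \<Rightarrow> rat poly" where
  "cheb_U 0 = 1"
| "cheb_U (Suc 0) = [:0, 2:]"
| "cheb_U (Suc (Suc n)) = [:0, 2:] * cheb_U (Suc n) - cheb_U n"

definition rf :: "rat poly \<Rightarrow> rat poly fract" where
  "rf p = Fract p 1"

definition S :: "nat \<Rightarrow> nat \<Rightarrow> rat poly fract" where
  "S n d = (\<Sum>k=0..n. rf (pcompose (cheb_U (d - 1)) (cheb_T ((d + 1) ^ k))) *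
              (\<Prod>j=0..k. 1 / rf (pcompose (cheb_U d) (cheb_T ((d + 1) ^ j)))))"

end

theory Submission
  imports Defs
begin

definition xx :: "rat poly" where "xx = [:0,1:]"

lemma x2: "[:0,2:] = 2 * xx"
  by (simp add: xx_def numeral_poly)

lemma T0: "cheb_T 0 = 1" by simp
lemma T1: "cheb_T (Suc 0) = xx" by (simp add: xx_def)
lemma TSS: "cheb_T (Suc (Suc n)) = 2 * xx * cheb_T (Suc n) - cheb_T n" by (simp add: x2)
lemma U0: "cheb_U 0 = 1" by simp
lemma U1: "cheb_U (Suc 0) = 2 * xx" by (simp add: x2)
lemma USS: "cheb_U (Suc (Suc n)) = 2 * xx * cheb_U (Suc n) - cheb_U n" by (simp add: x2)

declare cheb_T.simps[simp del] cheb_U.simps[simp del]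
lemmas cheb_simps = T0 T1 TSS U0 U1 USS

lemma T_rec': "k \<ge> 1 \<Longrightarrow> 2 * xx * cheb_T k = cheb_T (k+1) + cheb_T (k-1)"
  by (cases k rule: cheb_T.cases) (auto simp: cheb_simps)

lemma T_prod: "m \<le> n \<Longrightarrow> 2 * cheb_T m * cheb_T n = cheb_T (m+n) + cheb_T (n-m)"
proof (induction m arbitrary: n rule: cheb_T.induct)
  case 1 then show ?case by (simp add: T0)
next
  case 2
  then have "2 * xx * cheb_T n = cheb_T (n+1) + cheb_T (n-1)" by (intro T_rec') simp
  then show ?case by (simp add: T1 algebra_simps)
next
  case (3 k)
  have a: "2 * cheb_T (Suc k) * cheb_T n = cheb_T (Suc k + n) + cheb_T (n - Suc k)"
    using 3 by simp
  have b: "2 * cheb_T k * cheb_T n = cheb_T (k + n) + cheb_T (n - k)"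
    using 3 by simp
  have c: "2 * xx * cheb_T (Suc k + n) = cheb_T (Suc (Suc k) + n) + cheb_T (k+n)"
    using T_rec'[of "Suc k + n"] by simp
  have d: "2 * xx * cheb_T (n - Suc k) = cheb_T (n - k) + cheb_T (n - Suc (Suc k))"
    using T_rec'[of "n - Suc k"] 3(3) by (simp add: Suc_diff_Suc)
  have "2 * cheb_T (Suc (Suc k)) * cheb_T n
      = 2 * xx * (2 * cheb_T (Suc k) * cheb_T n) - 2 * cheb_T k * cheb_T n"
    by (simp add: TSS algebra_simps)
  also have "\<dots> = 2 * xx * cheb_T (Suc k + n) + 2 * xx * cheb_T (n - Suc k)
       - (cheb_T (k + n) + cheb_T (n - k))"
    unfolding a b by (simp add: algebra_simps)
  also have "\<dots> = cheb_T (Suc (Suc k) + n) + cheb_T (n - Suc (Suc k))"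
    by (simp only: c d)
  finally show ?case .
qed

lemma pcomp_x: "pcompose xx q = q"
  by (simp add: xx_def pcompose_pCons)

lemma pcomp_2: "pcompose (2::rat poly) q = 2"
  by (simp add: numeral_poly)

lemma T_comp: "pcompose (cheb_T a) (cheb_T b) = cheb_T (a * b)"
proof (induction a rule: cheb_T.induct)
  case 1 then show ?case by (simp add: pcompose_1 T0)
next
  case 2 then show ?case by (simp add: pcomp_x T1)
next
  case (3 a)
  have p: "2 * cheb_T b * cheb_T (Suc a * b) = cheb_T (b + Suc a * b) + cheb_T (Suc a * b - b)"
    by (rule T_prod) simp
  have e1: "b + Suc a * b = Suc (Suc a) * b" by simp
  have e2: "Suc a * b - b = a * b" by simp
  have p': "cheb_T (Suc (Suc a) * b) = 2 * cheb_T b * cheb_T (Suc a * b) - cheb_T (a * b)"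
    using p unfolding e1 e2 by (simp add: algebra_simps)
  show ?case using 3 unfolding p' TSS
    by (simp add: pcompose_diff pcompose_mult pcomp_2 pcomp_x T1 del: mult_Suc)
qed

lemma cassini: "cheb_U (Suc n) ^ 2 - 2 * xx * cheb_U (Suc n) * cheb_U n + cheb_U n ^ 2 = 1"
proof (induction n)
  case 0 then show ?case by (simp add: power2_eq_square U0 U1)
next
  case (Suc n)
  then show ?case by (simp add: power2_eq_square USS algebra_simps)
qed

lemma TU: "xx * cheb_U (Suc n) - cheb_U n = cheb_T (Suc (Suc n))"
proof (induction n rule: cheb_T.induct)
  case 1 then show ?case by (simp add: cheb_simps algebra_simps)
next
  case 2 then show ?case by (simp add: cheb_simps algebra_simps)
next
  case (3 n)
  have "xx * cheb_U (Suc (Suc (Suc n))) - cheb_U (Suc (Suc n))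
     = 2 * xx * (xx * cheb_U (Suc (Suc n)) - cheb_U (Suc n)) - (xx * cheb_U (Suc n) - cheb_U n)"
    by (simp only: USS) (simp add: algebra_simps)
  also have "\<dots> = 2 * xx * cheb_T (Suc (Suc (Suc n))) - cheb_T (Suc (Suc n))"
    using 3 by simp
  also have "\<dots> = cheb_T (Suc (Suc (Suc (Suc n))))" by (simp only: TSS)
  finally show ?case .
qed

lemma poly_T1: "poly (cheb_T k) 1 = 1"
  by (induction k rule: cheb_T.induct) (simp_all add: cheb_simps xx_def)

lemma poly_U1: "poly (cheb_U k) 1 = of_nat (k + 1)"
  by (induction k rule: cheb_T.induct) (simp_all add: cheb_simps xx_def algebra_simps)

lemma rf_mult: "rf (p * q) = rf p * rf q" by (simp add: rf_def)
lemma rf_add: "rf (p + q) = rf p + rf q" by (simp add: rf_def)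
lemma rf_diff: "rf (p - q) = rf p - rf q" by (simp add: rf_def)
lemma rf_1: "rf 1 = 1" by (simp add: rf_def One_fract_def)
lemma rf_2: "rf 2 = 2"
proof -
  have "rf (1 + 1) = rf 1 + rf 1" by (rule rf_add)
  then show ?thesis by (simp add: rf_1)
qed
lemma rf_pow2: "rf (p ^ 2) = rf p ^ 2" by (simp add: power2_eq_square rf_mult)
lemma rf_eq0: "rf p = 0 \<longleftrightarrow> p = 0" by (simp add: rf_def Zero_fract_def eq_fract)

lemma step_alg:
  fixes s x y v w p y' :: "'a::comm_ring_1"
  assumes A: "v^2 - 2*y*v*w + w^2 = 1"
    and f: "s^2 - 2*x*s + 1 = (p*v)^2"
    and g: "x - s = y * (p*v)"
    and B: "y*v - w = y'"
  shows "(s + w*p)^2 - 2*x*(s + w*p) + 1 = p^2 \<and> x - (s + w*p) = y' * p"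
proof
  have s: "s = x - y*(p*v)" using g by (simp add: algebra_simps)
  have f': "y^2*p^2*v^2 + 1 - x^2 = p^2*v^2" using f unfolding s
    by (simp add: power2_eq_square algebra_simps)
  have "(s + w*p)^2 - 2*x*(s + w*p) + 1 = p^2*(v^2 - 2*y*v*w + w^2) + (y^2*p^2*v^2 + 1 - x^2 - p^2*v^2)"
    unfolding s by (simp add: power2_eq_square algebra_simps)
  also have "\<dots> = p^2" using A f' by simp
  finally show "(s + w*p)^2 - 2*x*(s + w*p) + 1 = p^2" .
  show "x - (s + w*p) = y' * p" unfolding s B[symmetric] by (simp add: algebra_simps)
qed

theorem theorem1p1:
  fixes n d :: nat
  assumes "d \<ge> 1"
  shows "(S n d)\<^sup>2 - 2 * rf [:0, 1:] * S n d + 1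
           = (\<Prod>j=0..n. 1 / rf (pcompose (cheb_U d) (cheb_T ((d + 1) ^ j))))\<^sup>2"
proof -
  define V where "V j = rf (pcompose (cheb_U d) (cheb_T ((d + 1) ^ j)))" for j
  define W where "W j = rf (pcompose (cheb_U (d - 1)) (cheb_T ((d + 1) ^ j)))" for j
  define Y where "Y j = rf (cheb_T ((d + 1) ^ j))" for j
  define P where "P n = (\<Prod>j=0..n. 1 / V j)" for n
  define X where "X = rf [:0,1:]"
  obtain e where e: "d = Suc e" using assms by (cases d) auto
  have de: "d - 1 = e" using e by simp
  have Vnz: "V j \<noteq> 0" for j
  proof
    assume "V j = 0"
    then have "pcompose (cheb_U d) (cheb_T ((d + 1) ^ j)) = 0" by (simp add: V_def rf_eq0)
    then have "poly (pcompose (cheb_U d) (cheb_T ((d + 1) ^ j))) 1 = 0" by simp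
    then show False by (simp add: poly_pcompose poly_T1 poly_U1)
  qed
  have A: "V j ^ 2 - 2 * Y j * V j * W j + W j ^ 2 = 1" for j
  proof -
    define q where "q = cheb_T ((d + 1) ^ j)"
    have "pcompose (cheb_U (Suc e) ^ 2 - 2 * xx * cheb_U (Suc e) * cheb_U e + cheb_U e ^ 2) q = 1"
      by (simp only: cassini pcompose_1)
    then have "pcompose (cheb_U (Suc e)) q * pcompose (cheb_U (Suc e)) q - 2 * q * pcompose (cheb_U (Suc e)) q * pcompose (cheb_U e) q
       + pcompose (cheb_U e) q * pcompose (cheb_U e) q = 1"
      by (simp only: power2_eq_square pcompose_add pcompose_diff pcompose_mult pcomp_2 pcomp_x)
    then have "rf (pcompose (cheb_U (Suc e)) q * pcompose (cheb_U (Suc e)) q - 2 * q * pcompose (cheb_U (Suc e)) q * pcompose (cheb_U e) q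
       + pcompose (cheb_U e) q * pcompose (cheb_U e) q) = rf 1"
      by (rule arg_cong)
    then have "rf (pcompose (cheb_U (Suc e)) q) * rf (pcompose (cheb_U (Suc e)) q) - 2 * rf q * rf (pcompose (cheb_U (Suc e)) q) * rf (pcompose (cheb_U e) q)
       + rf (pcompose (cheb_U e) q) * rf (pcompose (cheb_U e) q) = 1"
      by (simp only: rf_add rf_diff rf_mult rf_2 rf_1)
    then show ?thesis unfolding V_def W_def Y_def q_def[symmetric] de e[symmetric]
      by (simp only: power2_eq_square)
  qed
  have B: "Y j * V j - W j = Y (Suc j)" for j
  proof -
    define q where "q = cheb_T ((d + 1) ^ j)"
    have "pcompose (xx * cheb_U (Suc e) - cheb_U e) q
         = pcompose (cheb_T (d+1)) q"
      by (simp add: TU e)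
    also have "\<dots> = cheb_T ((d + 1) ^ Suc j)" by (simp add: T_comp q_def)
    finally have "q * pcompose (cheb_U (Suc e)) q - pcompose (cheb_U e) q = cheb_T ((d + 1) ^ Suc j)"
      by (simp only: pcompose_diff pcompose_mult pcomp_x)
    then have "rf (q * pcompose (cheb_U (Suc e)) q - pcompose (cheb_U e) q) = rf (cheb_T ((d + 1) ^ Suc j))"
      by (rule arg_cong)
    then show ?thesis unfolding V_def W_def Y_def q_def[symmetric] de e[symmetric]
      by (simp only: rf_diff rf_mult)
  qed
  have Y0: "Y 0 = X" unfolding Y_def X_def power_0 One_nat_def T1 xx_def ..
  have PS: "P (Suc m) * V (Suc m) = P m" for m
    using Vnz[of "Suc m"] unfolding P_def prod.atLeast0_atMost_Suc by simp
  have Seq: "S m d = (\<Sum>k=0..m. W k * P k)" for m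
    unfolding S_def W_def V_def P_def by (rule refl)
  have SS: "S (Suc m) d = S m d + W (Suc m) * P (Suc m)" for m
    unfolding Seq by (rule sum.atLeast0_atMost_Suc)
  have inv: "(S m d)^2 - 2 * X * S m d + 1 = P m ^ 2 \<and> X - S m d = Y (Suc m) * P m" for m
  proof (induction m)
    case 0
    have S0: "S 0 d = 0 + W 0 * P 0" unfolding Seq by simp
    have P0: "P 0 * V 0 = 1" using Vnz[of 0] unfolding P_def by simp
    show ?case unfolding S0
      by (rule step_alg[where s=0 and x=X and y="Y 0" and v="V 0" and w="W 0" and p="P 0" and y'="Y (Suc 0)",
            OF A _ _ B]) (simp_all add: P0 Y0)
  next
    case (Suc m)
    show ?case unfolding SS
      by (rule step_alg[where s="S m d" and x=X and y="Y (Suc m)" and v="V (Suc m)" and w="W (Suc m)"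
            and p="P (Suc m)" and y'="Y (Suc (Suc m))", OF A _ _ B]) (use Suc in \<open>simp_all only: PS\<close>)
  qed
  have "(S n d)^2 - 2 * X * S n d + 1 = P n ^ 2" using inv[of n] by blast
  then show ?thesis unfolding X_def P_def V_def .
qed

end
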